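(* For integers $p\ge1$ and $0\le k\le n$, and all $x$, \[ \sum_{j=0}^{n-k}\binom{n-k}{j}B_{j+k}^{(p)}(x)=\sum_{j=0}^{k}\binom{k}{j}(-1)^{j}\Big\{B_{n-j}^{(p)}(x)+(n-j)B_{n-j-1}^{(p-1)}(x)\Big\}, \] where the term $(n-j)B^{(p-1)}_{n-j-1}(x)$ is taken to be $0$ when $n-j=0$.
   Context: For $p\ge1$, $B_n^{(p)}(x)$ denotes the higher-order Bernoulli polynomial with all parameters equal to $1$: $\sum_{n\ge0}B_n^{(p)}(x)\frac{t^n}{n!}=e^{xt}\left(\frac{t}{e^t-1}\right)^p$; in particular $B_n^{(0)}(x)=x^n$. *)

theory Defs
  imports "HOL-Computational_Algebra.Formal_Power_Series"
begin

definition hbern :: "nat \<Rightarrow> nat \<Rightarrow> real \<Rightarrow> real" where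
  "hbern p n x = fact n * fps_nth (fps_exp x * (fps_X / (fps_exp 1 - 1)) ^ p) n"

lemma hbern_0_sanity: "hbern 0 n x = x ^ n"
  by (simp add: hbern_def)

end

theory Submission
  imports Defs "HOL-Computational_Algebra.Polynomial"
begin

lemma coeffY: "coeff ([:1,1:] ^ q) i = (of_nat (q choose i) :: real)"
proof (cases "i \<le> q")
  case True thus ?thesis by (simp add: coeff_linear_poly_power)
next
  case False
  have "degree ([:1::real,1:] ^ q) \<le> q"
    by (metis degree_linear_power order_refl)
  thus ?thesis using False by (simp add: coeff_eq_0 binomial_eq_0)
qed

definition LL :: "nat \<Rightarrow> (nat \<Rightarrow> real) \<Rightarrow> real poly \<Rightarrow> real" where
  "LL N a q = (\<Sum>i=0..N. coeff q i * a i)"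

lemma LL_sum: "LL N a (\<Sum>j\<in>J. f j) = (\<Sum>j\<in>J. LL N a (f j))"
  unfolding LL_def coeff_sum sum_distrib_right by (rule sum.swap)

lemma LL_smult: "LL N a (smult c q) = c * LL N a q"
  unfolding LL_def by (simp add: sum_distrib_left mult.assoc)

lemma LL_Y: "q \<le> N \<Longrightarrow> LL N a ([:1,1:] ^ q) = (\<Sum>i=0..q. real (q choose i) * a i)"
proof -
  assume "q \<le> N"
  have "LL N a ([:1,1:] ^ q) = (\<Sum>i=0..N. real (q choose i) * a i)"
    unfolding LL_def coeffY by simp
  also have "\<dots> = (\<Sum>i=0..q. real (q choose i) * a i)"
    by (rule sum.mono_neutral_right) (use \<open>q \<le> N\<close> in \<open>auto simp: binomial_eq_0\<close>)
  finally show ?thesis .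
qed

lemma LL_XY: "k + m \<le> N \<Longrightarrow> LL N a (monom 1 k * [:1,1:] ^ m) = (\<Sum>j=0..m. real (m choose j) * a (j + k))"
proof -
  assume h: "k + m \<le> N"
  have "LL N a (monom 1 k * [:1,1:] ^ m) = (\<Sum>i=0..N. (if i < k then 0 else real (m choose (i - k))) * a i)"
    unfolding LL_def coeff_monom_mult coeffY by (intro sum.cong) auto
  also have "\<dots> = (\<Sum>i=k..N. real (m choose (i - k)) * a i)"
    by (rule sum.mono_neutral_cong_right) auto
  also have "\<dots> = (\<Sum>j=0..N-k. real (m choose j) * a (j + k))"
    using h by (intro sum.reindex_bij_witness[where i="\<lambda>j. j + k" and j="\<lambda>i. i - k"]) auto
  also have "\<dots> = (\<Sum>j=0..m. real (m choose j) * a (j + k))"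
    by (rule sum.mono_neutral_right) (use h in \<open>auto simp: binomial_eq_0\<close>)
  finally show ?thesis .
qed

lemma poly_id: "monom (1::real) k * [:1,1:] ^ m =
   (\<Sum>j=0..k. smult (real (k choose j) * (-1) ^ j) ([:1,1:] ^ (m + k - j)))"
proof -
  have "monom (1::real) k = ([:1,1:] + (-1)) ^ k"
  proof -
    have "[:0,1::real:] = [:1,1:] + (-1)" by (simp add: one_pCons)
    thus ?thesis by (simp add: monom_altdef)
  qed
  also have "\<dots> = (\<Sum>j\<le>k. of_nat (k choose j) * (-1) ^ j * [:1,1:] ^ (k - j))"
    by (subst add.commute, subst binomial_ring) (simp add: mult_ac)
  finally have "monom (1::real) k * [:1,1:] ^ m =
     (\<Sum>j\<le>k. of_nat (k choose j) * (-1) ^ j * [:1,1:] ^ (k - j) * [:1,1:] ^ m)"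
    by (simp add: sum_distrib_right)
  also have "\<dots> = (\<Sum>j=0..k. smult (real (k choose j) * (-1) ^ j) ([:1,1:] ^ (m + k - j)))"
  proof (rule sum.cong)
    fix j assume "j \<in> {0..k}"
    hence jk: "j \<le> k" by simp
    have m1: "(-1::real poly)^j = [:(-1)^j:]" by (induct j) (auto simp: one_pCons)
    have "[:1,1:] ^ (k - j) * [:1,1::real:] ^ m = [:1,1:] ^ (m + k - j)"
      using jk by (simp add: power_add[symmetric] add.commute)
    thus "of_nat (k choose j) * (-1) ^ j * [:1,1:] ^ (k - j) * [:1,1::real:] ^ m =
        smult (real (k choose j) * (-1) ^ j) ([:1,1:] ^ (m + k - j))"
      by (simp add: of_nat_poly m1 mult.assoc mult.commute[of "(-1::real)^j"])
  qed (auto simp: atLeast0AtMost)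
  finally show ?thesis .
qed

lemma comm_comb:
  fixes a :: "nat \<Rightarrow> real"
  assumes "k \<le> n"
  shows "(\<Sum>j = 0..n - k. real ((n - k) choose j) * a (j + k)) =
    (\<Sum>j = 0..k. real (k choose j) * (-1) ^ j * (\<Sum>i=0..n-j. real ((n-j) choose i) * a i))"
proof -
  have "(\<Sum>j = 0..n - k. real ((n - k) choose j) * a (j + k)) = LL n a (monom 1 k * [:1,1:] ^ (n-k))"
    using assms by (simp add: LL_XY)
  also have "\<dots> = (\<Sum>j=0..k. real (k choose j) * (-1) ^ j * LL n a ([:1,1:] ^ (n - k + k - j)))"
    unfolding poly_id LL_sum LL_smult ..
  also have "\<dots> = (\<Sum>j = 0..k. real (k choose j) * (-1) ^ j * (\<Sum>i=0..n-j. real ((n-j) choose i) * a i))"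
    using assms by (intro sum.cong refl) (simp add: LL_Y)
  finally show ?thesis .
qed

lemma hbern_shift:
  assumes "p \<ge> 1"
  shows "(\<Sum>i=0..n. real (n choose i) * hbern p i x) =
     hbern p n x + (if n = 0 then 0 else real n * hbern (p - 1) (n - 1) x)"
proof -
  define G :: "real fps" where "G = fps_X / (fps_exp 1 - 1)"
  define F where "F q = fps_exp x * G ^ q" for q
  have ne: "fps_exp (1::real) - 1 \<noteq> 0"
  proof
    assume "fps_exp (1::real) - 1 = 0"
    hence "fps_nth (fps_exp (1::real) - 1) 1 = 0" by simp
    thus False by simp
  qed
  have sd: "subdegree (fps_exp (1::real) - 1) \<le> subdegree (fps_X :: real fps)"
    by (simp add: subdegree_leI)
  have GX: "G * (fps_exp 1 - 1) = fps_X"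
    unfolding G_def by (rule fps_times_divide_eq[OF ne sd])
  have Fp: "F p = F (p - 1) * G"
    using assms unfolding F_def by (cases p) (auto simp: mult_ac)
  have key: "F p * fps_exp 1 = F p + fps_X * F (p - 1)"
  proof -
    have "F p * fps_exp 1 = F p + F p * (fps_exp 1 - 1)" by (simp add: algebra_simps)
    also have "F p * (fps_exp 1 - 1) = F (p - 1) * (G * (fps_exp 1 - 1))"
      by (simp add: Fp mult.assoc)
    finally show ?thesis by (simp add: GX mult.commute)
  qed
  have hb: "hbern q m x = fact m * fps_nth (F q) m" for q m
    unfolding hbern_def F_def G_def ..
  have "(\<Sum>i=0..n. real (n choose i) * hbern p i x) = fact n * fps_nth (F p * fps_exp 1) n"
    unfolding fps_mult_nth sum_distrib_left hb
  proof (rule sum.cong[OF refl])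
    fix i assume "i \<in> {0..n}"
    hence i: "i \<le> n" by simp
    show "real (n choose i) * (fact i * fps_nth (F p) i) = fact n * (fps_nth (F p) i * fps_nth (fps_exp 1) (n - i))"
      using i by (simp add: binomial_fact field_simps)
  qed
  also have "\<dots> = hbern p n x + (if n = 0 then 0 else real n * hbern (p - 1) (n - 1) x)"
  proof (cases n)
    case 0 thus ?thesis by (simp add: key hb)
  next
    case (Suc m)
    thus ?thesis by (simp add: key hb algebra_simps)
  qed
  finally show ?thesis .
qed

theorem mainTheorem9:
  fixes p k n :: nat and x :: real
  assumes "p \<ge> 1" and "k \<le> n"
  shows "(\<Sum>j = 0..n - k. real ((n - k) choose j) * hbern p (j + k) x) =
    (\<Sum>j = 0..k. real (k choose j) * (-1) ^ j *
       (hbern p (n - j) x +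
        (if n - j = 0 then 0 else real (n - j) * hbern (p - 1) (n - j - 1) x)))"
  using comm_comb[where a="\<lambda>i. hbern p i x", OF assms(2)]
  by (simp only: hbern_shift[OF assms(1)])

end
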